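(* Fix $q\in(0,1]$. For every $d\ge1$, $\bar\sigma_{1,q}^2(2,d)=q/d$, and for fixed $s\in(0,2]$, as $d\to\infty$, $$\bar\sigma_{1,q}^2(s,d)=\frac qd+\frac{(3-q)(2-s)}{4d^2}+o\Big(\frac1{d^2}\Big).$$
   Context: For $q\in(0,1]$, integer $d\ge1$ and $s>0$: $h_d(t)=\binom dtq^t(1-q)^{d-t}$, $I_{1,q}(s,d)=q^{-s}2^{s/2}\sum_{t=1}^dh_d(t)\Gamma(t/2+s/2)/\Gamma(t/2)$, and $\bar\sigma_{1,q}(s,d)=I_{1,q}(s,d)^{-1/s}$. (This is the critical weight standard deviation preserving $\mathbb E\|x^{(k)}\|^s$ for the zero-bias width-$d$ linear network $x^{(k+1)}=(W^{(k+1)}x^{(k)})\odot\varepsilon^{(k+1)}$ with i.i.d. $\mathcal N(0,\sigma^2)$ weights and dropout vectors with i.i.d. components equal to $0$ w.p. $1-q$ and $1/q$ w.p. $q$.) *)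

theory Defs
  imports "HOL-Analysis.Analysis" "HOL-Library.Landau_Symbols"
begin

definition h_bin :: "real \<Rightarrow> nat \<Rightarrow> nat \<Rightarrow> real" where
  "h_bin q d t = real (d choose t) * q ^ t * (1 - q) ^ (d - t)"

definition I1q :: "real \<Rightarrow> real \<Rightarrow> nat \<Rightarrow> real" where
  "I1q q s d = q powr (-s) * 2 powr (s / 2) *
     (\<Sum>t=1..d. h_bin q d t * Gamma (real t / 2 + s / 2) / Gamma (real t / 2))"

definition sigma_bar :: "real \<Rightarrow> real \<Rightarrow> nat \<Rightarrow> real" where
  "sigma_bar q s d = I1q q s d powr (-1 / s)"

end

theory Submission
  imports Defs
begin


definition EB :: "real \<Rightarrow> nat \<Rightarrow> (nat \<Rightarrow> real) \<Rightarrow> real" where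
  "EB q d f = (\<Sum>t\<le>d. h_bin q d t * f t)"

lemma pascal_sum:
  fixes g :: "nat \<Rightarrow> real"
  shows "(\<Sum>t\<le>Suc d. real (Suc d choose t) * g t) = (\<Sum>t\<le>d. real (d choose t) * (g t + g (Suc t)))"
proof -
  have "(\<Sum>t\<le>Suc d. real (Suc d choose t) * g t) = g 0 + (\<Sum>t\<le>d. real (Suc d choose Suc t) * g (Suc t))"
    by (subst sum.atMost_Suc_shift) simp
  also have "\<dots> = g 0 + (\<Sum>t\<le>d. real (d choose t) * g (Suc t)) + (\<Sum>t\<le>d. real (d choose Suc t) * g (Suc t))"
    by (simp add: sum.distrib algebra_simps)
  also have "(\<Sum>t\<le>d. real (d choose Suc t) * g (Suc t)) = (\<Sum>t\<le>Suc d. real (d choose t) * g t) - g 0"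
    by (subst sum.atMost_Suc_shift) simp
  also have "(\<Sum>t\<le>Suc d. real (d choose t) * g t) = (\<Sum>t\<le>d. real (d choose t) * g t)"
    by simp
  finally show ?thesis by (simp add: sum.distrib algebra_simps)
qed

lemma EB_Suc: "EB q (Suc d) f = q * EB q d (\<lambda>t. f (Suc t)) + (1 - q) * EB q d f"
proof -
  have "EB q (Suc d) f = (\<Sum>t\<le>Suc d. real (Suc d choose t) * (q ^ t * (1 - q) ^ (Suc d - t) * f t))"
    unfolding EB_def h_bin_def by (simp add: mult_ac)
  also have "\<dots> = (\<Sum>t\<le>d. real (d choose t) * (q ^ t * (1 - q) ^ (Suc d - t) * f t
        + q ^ Suc t * (1 - q) ^ (Suc d - Suc t) * f (Suc t)))"
    by (rule pascal_sum)
  also have "\<dots> = (\<Sum>t\<le>d. (1-q) * (h_bin q d t * f t) + q * (h_bin q d t * f (Suc t)))"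
    by (intro sum.cong refl) (auto simp: h_bin_def Suc_diff_le algebra_simps)
  finally show ?thesis unfolding EB_def by (simp add: sum.distrib sum_distrib_left)
qed

lemma EB_lin: "EB q d (\<lambda>t. f t + g t) = EB q d f + EB q d g"
  "EB q d (\<lambda>t. c * f t) = c * EB q d f"
  "EB q d (\<lambda>t. f t - g t) = EB q d f - EB q d g"
  unfolding EB_def by (simp_all add: sum.distrib sum_distrib_left algebra_simps sum_subtractf)

lemma EB_const: "EB q d (\<lambda>t. c) = c"
proof (induction d)
  case 0 then show ?case by (simp add: EB_def h_bin_def)
next
  case (Suc d) then show ?case by (simp add: EB_Suc algebra_simps)
qed

lemma EB_mean: "EB q d (\<lambda>t. real t - real d * q) = 0"
proof (induction d)
  case 0 then show ?case by (simp add: EB_def h_bin_def)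
next
  case (Suc d)
  have "EB q (Suc d) (\<lambda>t. real t - real (Suc d) * q) =
     EB q d (\<lambda>t. (real t - real d * q) + (1 - q)) * q + (1-q) * EB q d (\<lambda>t. (real t - real d * q) - q)"
    by (simp add: EB_Suc algebra_simps)
  also have "\<dots> = 0" using Suc by (simp add: EB_lin EB_const algebra_simps)
  finally show ?case .
qed

lemma EB_var: "EB q d (\<lambda>t. (real t - real d * q)^2) = real d * q * (1 - q)"
proof (induction d)
  case 0 then show ?case by (simp add: EB_def h_bin_def)
next
  case (Suc d)
  define Y where "Y = (\<lambda>t. real t - real d * q)"
  have "EB q (Suc d) (\<lambda>t. (real t - real (Suc d) * q)^2) =
     q * EB q d (\<lambda>t. (Y t + (1 - q))^2) + (1-q) * EB q d (\<lambda>t. (Y t - q)^2)"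
    by (simp add: EB_Suc Y_def algebra_simps)
  also have "\<dots> = EB q d (\<lambda>t. (Y t)^2 + (2*q*(1-q) - 2*(1-q)*q) * Y t + (q*(1-q)^2 + (1-q)*q^2))"
    unfolding EB_def by (simp add: sum_distrib_left sum.distrib[symmetric] power2_eq_square algebra_simps)
  also have "\<dots> = real (Suc d) * q * (1 - q)"
    using Suc EB_mean[of q d] unfolding Y_def by (simp add: EB_lin EB_const algebra_simps power2_eq_square)
  finally show ?case .
qed

lemma EB_m4: "EB q d (\<lambda>t. (real t - real d * q)^4) = 3 * real d * (real d - 1) * (q*(1-q))^2 + real d * (q*(1-q)) * (1 - 3*(q*(1-q)))"
proof (induction d)
  case 0 then show ?case by (simp add: EB_def h_bin_def)
next
  case (Suc d)
  define Y where "Y = (\<lambda>t. real t - real d * q)"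
  have "EB q (Suc d) (\<lambda>t. (real t - real (Suc d) * q)^4) =
     q * EB q d (\<lambda>t. (Y t + (1 - q))^4) + (1-q) * EB q d (\<lambda>t. (Y t - q)^4)"
    by (simp add: EB_Suc Y_def algebra_simps)
  also have "\<dots> = EB q d (\<lambda>t. (Y t)^4 + 6*(q*(1-q)) * (Y t)^2 + (4*q*(1-q)^3 - 4*(1-q)*q^3) * Y t + (q*(1-q)^4 + (1-q)*q^4))"
  proof -
    have e: "\<And>t. q * (Y t + (1 - q))^4 + (1-q) * (Y t - q)^4 = (Y t)^4 + 6*(q*(1-q)) * (Y t)^2 + (4*q*(1-q)^3 - 4*(1-q)*q^3) * Y t + (q*(1-q)^4 + (1-q)*q^4)"
      by algebra
    have "q * EB q d (\<lambda>t. (Y t + (1 - q))^4) + (1-q) * EB q d (\<lambda>t. (Y t - q)^4)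
       = EB q d (\<lambda>t. q * (Y t + (1 - q))^4 + (1-q) * (Y t - q)^4)"
      by (simp add: EB_lin)
    then show ?thesis by (simp only: e)
  qed
  also have "\<dots> = EB q d (\<lambda>t. (Y t)^4) + 6*(q*(1-q)) * EB q d (\<lambda>t. (Y t)^2) + (4*q*(1-q)^3 - 4*(1-q)*q^3) * EB q d Y + (q*(1-q)^4 + (1-q)*q^4)"
    by (simp add: EB_lin EB_const)
  also have "\<dots> = 3 * real (Suc d) * (real (Suc d) - 1) * (q*(1-q))^2 + real (Suc d) * (q*(1-q)) * (1 - 3*(q*(1-q)))"
  proof -
    have h4: "EB q d (\<lambda>t. (Y t)^4) = 3 * real d * (real d - 1) * (q*(1-q))^2 + real d * (q*(1-q)) * (1 - 3*(q*(1-q)))"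
      using Suc unfolding Y_def .
    have h2: "EB q d (\<lambda>t. (Y t)^2) = real d * q * (1 - q)" using EB_var[of q d] unfolding Y_def .
    have h1: "EB q d Y = 0" using EB_mean[of q d] unfolding Y_def .
    show ?thesis unfolding h4 h2 h1 of_nat_Suc by algebra
  qed
  finally show ?case .
qed



lemma ln_lower3: assumes "(u::real) \<ge> 0" shows "u - u^2/2 \<le> ln (1 + u)"
proof -
  let ?p = "\<lambda>u::real. ln (1 + u) - u + u^2/2"
  have "?p 0 \<le> ?p u"
  proof (rule DERIV_nonneg_imp_increasing_open[OF assms])
    fix x :: real assume x: "0 < x" "x < u"
    have "DERIV ?p x :> (1/(1+x) - 1 + x)"
      using x by (auto intro!: derivative_eq_intros)
    moreover have "1/(1+x) - 1 + x \<ge> 0" using x by (simp add: field_simps)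
    ultimately show "\<exists>y. DERIV ?p x :> y \<and> y \<ge> 0" by blast
  next
    show "continuous_on {0..u} ?p" by (intro continuous_intros) auto
  qed
  then show ?thesis by simp
qed

lemma ln_upper3: assumes "(u::real) \<ge> 0" shows "ln (1 + u) \<le> u - u^2/2 + u^3/3"
proof -
  let ?p = "\<lambda>u::real. u - u^2/2 + u^3/3 - ln (1 + u)"
  have "?p 0 \<le> ?p u"
  proof (rule DERIV_nonneg_imp_increasing_open[OF assms])
    fix x :: real assume x: "0 < x" "x < u"
    have "DERIV ?p x :> (1 - x + x^2 - 1/(1+x))"
      using x by (auto intro!: derivative_eq_intros simp: power2_eq_square)
    moreover have "1 - x + x^2 - 1/(1+x) \<ge> 0"
    proof -
      have "1 - x + x^2 - 1/(1+x) = x^3/(1+x)" using x by (simp add: field_simps power2_eq_square power3_eq_cube)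
      then show ?thesis using x by simp
    qed
    ultimately show "\<exists>y. DERIV ?p x :> y \<and> y \<ge> 0" by blast
  next
    show "continuous_on {0..u} ?p" by (intro continuous_intros) auto
  qed
  then show ?thesis by simp
qed

lemma exp_upper_neg: assumes "(z::real) \<le> 0" shows "exp z \<le> 1 + z + z^2"
proof -
  have "1 - z \<le> exp (-z)" using exp_ge_add_one_self[of "-z"] by simp
  hence "exp z \<le> 1 / (1 - z)" using assms by (simp add: exp_minus field_simps)
  also have "1 / (1 - z) \<le> 1 + z + z^2"
  proof -
    have "(1 + z + z^2) * (1 - z) = 1 - z^3" by (simp add: algebra_simps power2_eq_square power3_eq_cube)
    moreover have "0 \<le> -(z^3)" proof -
      have "0 \<le> (-z)^3" using assms by simp
      then show ?thesis by simp
    qed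
    ultimately have "1 \<le> (1 + z + z^2) * (1 - z)" by simp
    then show ?thesis using assms by (simp add: field_simps)
  qed
  finally show ?thesis .
qed

lemma exp_upper_small: assumes "\<bar>z::real\<bar> \<le> 1" shows "exp z \<le> 1 + z + z^2"
  using exp_bound[of z] exp_upper_neg[of z] assms by (cases "z \<ge> 0") auto

locale gam =
  fixes a :: real
  assumes a0: "0 < a" and a1: "a < 1"
begin

definition c where "c = a * (1 - a) / 2"
definition g where "g y = ln (Gamma (y + a)) - ln (Gamma y) - a * ln y + c / y"

lemma c_bounds: "0 < c" "c \<le> 1/8"
proof -
  show "0 < c" using a0 a1 by (simp add: c_def)
  have "a * (1 - a) \<le> 1/4" using a0 a1
  proof -
    have "0 \<le> (a - 1/2)^2" by simp
    then show ?thesis by (simp add: power2_eq_square algebra_simps)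
  qed
  then show "c \<le> 1/8" by (simp add: c_def)
qed

lemma lnG_plus1: assumes x: "x > 0" shows "ln (Gamma (x + 1)) = ln x + ln (Gamma (x::real))"
proof -
  have "Gamma (x + 1) = x * Gamma x" by (rule Gamma_plus1) (use x in \<open>auto elim!: nonpos_Ints_cases\<close>)
  moreover have g: "Gamma x > 0" using x by simp
  moreover have "ln (x * Gamma x) = ln x + ln (Gamma x)" by (rule ln_mult_pos) (use x g in auto)
  ultimately show ?thesis by simp
qed

lemma wendel_upper: assumes x: "x > 0"
  shows "ln (Gamma (x + a)) \<le> ln (Gamma x) + a * ln x"
proof -
  have "(ln \<circ> Gamma) ((1 - a) *\<^sub>R x + a *\<^sub>R (x + 1)) \<le> (1 - a) * (ln \<circ> Gamma) x + a * (ln \<circ> Gamma) (x + 1)"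
    by (rule convex_onD[OF log_convex_Gamma_real]) (use x a0 a1 in auto)
  moreover have "(1 - a) *\<^sub>R x + a *\<^sub>R (x + 1) = x + a" by (simp add: algebra_simps)
  ultimately show ?thesis using lnG_plus1[OF x] by (simp add: algebra_simps)
qed

lemma wendel_lower: assumes x: "x > 0"
  shows "ln (Gamma x) + ln x - (1 - a) * ln (x + a) \<le> ln (Gamma (x + a))"
proof -
  have "(ln \<circ> Gamma) ((1 - (1 - a)) *\<^sub>R (x + a) + (1 - a) *\<^sub>R (x + a + 1)) \<le> (1 - (1 - a)) * (ln \<circ> Gamma) (x + a) + (1 - a) * (ln \<circ> Gamma) (x + a + 1)"
    by (rule convex_onD[OF log_convex_Gamma_real]) (use x a0 a1 in auto)
  moreover have "(1 - (1 - a)) *\<^sub>R (x + a) + (1 - a) *\<^sub>R (x + a + 1) = x + 1" by (simp add: algebra_simps)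
  moreover have "ln (Gamma (x + a + 1)) = ln (x + a) + ln (Gamma (x + a))"
    using lnG_plus1[of "x + a"] x a0 by simp
  ultimately show ?thesis using lnG_plus1[OF x] by (simp add: algebra_simps)
qed

lemma g_small: assumes z: "z > 0" shows "\<bar>g z\<bar> \<le> 1 / z"
proof -
  have u: "ln (Gamma (z + a)) - ln (Gamma z) - a * ln z \<le> 0" using wendel_upper[OF z] by simp
  have "1 + a / z = (z + a) / z" using z by (simp add: field_simps)
  hence "ln (z + a) - ln z = ln (1 + a / z)" using z a0 ln_div[of "z + a" z] by simp
  also have "\<dots> \<le> a / z" using z a0 by (intro ln_add_one_self_le_self) simp
  finally have la: "ln (z + a) - ln z \<le> a / z" .
  have "ln (Gamma (z + a)) - ln (Gamma z) - a * ln z \<ge> - ((1 - a) * (ln (z + a) - ln z))"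
    using wendel_lower[OF z] by (simp add: algebra_simps)
  moreover have "(1 - a) * (ln (z + a) - ln z) \<le> (1 - a) * (a / z)"
    using la a1 by (intro mult_left_mono) auto
  moreover have "(1 - a) * (a / z) = 2 * c / z" by (simp add: c_def)
  ultimately have l: "ln (Gamma (z + a)) - ln (Gamma z) - a * ln z \<ge> - (2 * c / z)" by linarith
  have c1: "c / z \<le> (1/8) / z" by (rule divide_right_mono) (use c_bounds z in auto)
  have c2: "0 \<le> c / z" using c_bounds z by auto
  show ?thesis unfolding g_def using u l c1 c2 c_bounds by (simp add: abs_le_iff field_simps) 
qed

lemma cube_tele: assumes y: "y \<ge> (1/2::real)" shows "1 / y^3 \<le> 3 * (1 / y^2 - 1 / (y + 1)^2)"
proof -
  have p: "y > 0" using y by simp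
  have "1 / y^3 = (y + 1)^2 / (y^3 * (y+1)^2)" using p by (simp add: field_simps)
  also have "\<dots> \<le> (3 * y * (2 * y + 1)) / (y^3 * (y+1)^2)"
  proof (rule divide_right_mono)
    have "5 * y^2 + y - 1 \<ge> 0"
    proof -
      have "5 * y^2 \<ge> 5 * (1/2) * y" using y p by (simp add: power2_eq_square mult_right_mono)
      then show ?thesis using y by linarith
    qed
    then show "(y + 1)^2 \<le> 3 * y * (2 * y + 1)" by (simp add: power2_eq_square algebra_simps)
  qed (use p in simp)
  also have "\<dots> = 3 * (1 / y^2 - 1 / (y + 1)^2)"
  proof -
    have q1: "y + 1 \<noteq> 0" "y \<noteq> 0" using p by auto
    have "1 / y^2 - 1 / (y + 1)^2 = ((y+1)^2 - y^2) / (y^2 * (y+1)^2)"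
      using q1 by (simp add: diff_divide_distrib)
    also have "\<dots> = (2*y + 1) / (y^2 * (y+1)^2)" by (simp add: power2_eq_square algebra_simps)
    finally have "3 * (1 / y^2 - 1 / (y + 1)^2) = 3 * (2*y + 1) / (y^2 * (y+1)^2)" by simp
    also have "\<dots> = (3 * y * (2 * y + 1)) / (y^3 * (y+1)^2)"
      using q1 by (simp add: power2_eq_square power3_eq_cube)
    finally show ?thesis by simp
  qed
  finally show ?thesis .
qed

lemma g_step: assumes y: "y \<ge> (1/2::real)" shows "\<bar>g y - g (y + 1)\<bar> \<le> 3 * (1 / y^2 - 1 / (y + 1)^2)"
proof -
  have p: "y > 0" using y by simp
  define u where "u = 1 / y"
  have u0: "u > 0" using p by (simp add: u_def)
  have "1 + u = (y + 1) / y" using p by (simp add: u_def field_simps)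
  hence e1: "ln (y + 1) - ln y = ln (1 + u)" using p ln_div[of "y + 1" y] by simp
  have "1 + a * u = (y + a) / y" using p by (simp add: u_def field_simps)
  hence e2: "ln (y + a) - ln y = ln (1 + a * u)" using p a0 ln_div[of "y + a" y] by simp
  have G1: "ln (Gamma (y + 1)) = ln y + ln (Gamma y)" using lnG_plus1[OF p] .
  have G2: "ln (Gamma (y + 1 + a)) = ln (y + a) + ln (Gamma (y + a))"
    using lnG_plus1[of "y + a"] p a0 by (simp add: add_ac)
  have cc: "c / y - c / (y + 1) = c * u^2 - c * u^3 / (1 + u)"
  proof -
    have q1: "y + 1 \<noteq> 0" "y \<noteq> 0" "1 + u \<noteq> 0" using p u0 by auto
    have s1: "c / y - c / (y + 1) = c / (y * (y + 1))" using q1 by (simp add: field_simps)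
    have s2: "c * u^2 - c * u^3 / (1 + u) = c * u^2 / (1 + u)" using q1
      by (simp add: field_simps power2_eq_square power3_eq_cube)
    have "1 + u = (y + 1) / y" using q1 by (simp add: u_def field_simps)
    hence s3: "c * u^2 / (1 + u) = c / (y * (y + 1))" using q1 by (simp add: u_def power2_eq_square)
    show ?thesis using s1 s2 s3 by simp
  qed
  have diff: "g y - g (y + 1) = a * ln (1 + u) - ln (1 + a * u) + c * u^2 - c * u^3 / (1 + u)"
    unfolding g_def using G1 G2 e1 e2 cc by (simp add: algebra_simps)
  have L1: "a * (u - u^2/2) \<le> a * ln (1 + u)" using ln_lower3[of u] u0 a0 by (intro mult_left_mono) auto
  have U1: "a * ln (1 + u) \<le> a * (u - u^2/2 + u^3/3)" using ln_upper3[of u] u0 a0 by (intro mult_left_mono) auto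
  have L2: "a*u - (a*u)^2/2 \<le> ln (1 + a * u)" using ln_lower3[of "a*u"] u0 a0 by simp
  have U2: "ln (1 + a * u) \<le> a*u - (a*u)^2/2 + (a*u)^3/3" using ln_upper3[of "a*u"] u0 a0 by simp
  have a3: "a^3 \<le> 1" using a0 a1 by (simp add: power_le_one)
  have u3: "0 < u^3" using u0 by simp
  have t1: "c * u^3 / (1 + u) \<le> c * u^3" using u0 c_bounds u3
    by (simp add: divide_le_eq mult_le_cancel_left_pos)
  have t0: "0 \<le> c * u^3 / (1 + u)" using u0 c_bounds by simp
  have hi: "g y - g (y + 1) \<le> u^3"
  proof -
    have "g y - g (y + 1) \<le> a * (u - u^2/2 + u^3/3) - (a*u - (a*u)^2/2) + c * u^2"
      using diff U1 L2 t0 by linarith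
    also have "\<dots> = a * u^3 / 3" unfolding c_def by (simp add: field_simps power2_eq_square power3_eq_cube)
    also have "\<dots> \<le> u^3" using a1 u3 by simp
    finally show ?thesis .
  qed
  have lo: "- (u^3) \<le> g y - g (y + 1)"
  proof -
    have "a * (u - u^2/2) - (a*u - (a*u)^2/2 + (a*u)^3/3) + c * u^2 - c * u^3 \<le> g y - g (y + 1)"
      using diff L1 U2 t1 by linarith
    moreover have "a * (u - u^2/2) - (a*u - (a*u)^2/2 + (a*u)^3/3) + c * u^2 - c * u^3 = - (a^3/3 + c) * u^3"
      unfolding c_def by (simp add: field_simps power2_eq_square power3_eq_cube)
    moreover have "(a^3/3 + c) * u^3 \<le> 1 * u^3" using a3 c_bounds u3 by (intro mult_right_mono) auto
    ultimately show ?thesis by linarith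
  qed
  have "u^3 = 1 / y^3" by (simp add: u_def power_one_over)
  with hi lo cube_tele[OF y] show ?thesis by (simp add: abs_le_iff)
qed

lemma g_diff: assumes y: "y \<ge> (1/2::real)"
  shows "\<bar>g y - g (y + real N)\<bar> \<le> 3 * (1 / y^2 - 1 / (y + real N)^2)"
proof (induction N)
  case 0 then show ?case by simp
next
  case (Suc N)
  have "\<bar>g (y + real N) - g (y + real N + 1)\<bar> \<le> 3 * (1 / (y + real N)^2 - 1 / (y + real N + 1)^2)"
    using g_step[of "y + real N"] y by simp
  with Suc show ?case by (simp add: add_ac)
qed

lemma g_bound: assumes y: "y \<ge> (1/2::real)" shows "\<bar>g y\<bar> \<le> 3 / y^2"
proof (rule field_le_epsilon)
  fix e :: real assume e: "0 < e"
  define N where "N = nat \<lceil>1 / e\<rceil>"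
  have N: "real N \<ge> 1 / e" unfolding N_def by linarith
  have pos: "y + real N > 0" using y by simp
  have "1 / (y + real N) \<le> e"
  proof -
    have "1 / e \<le> y + real N" using N y by simp
    then show ?thesis using e pos by (simp add: field_simps)
  qed
  moreover have "\<bar>g (y + real N)\<bar> \<le> 1 / (y + real N)" by (rule g_small[OF pos])
  moreover have "\<bar>g y - g (y + real N)\<bar> \<le> 3 * (1 / y^2 - 1 / (y + real N)^2)" by (rule g_diff[OF y])
  moreover have "3 * (1 / y^2 - 1 / (y + real N)^2) \<le> 3 / y^2" by simp
  ultimately show "\<bar>g y\<bar> \<le> 3 / y^2 + e" unfolding abs_le_iff by linarith
qed

lemma R_bound: assumes y: "y \<ge> (1/2::real)" shows "\<bar>exp (g y - c / y) - 1 + c / y\<bar> \<le> 20 / y^2"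
proof -
  have p: "y > 0" using y by simp
  have gb: "\<bar>g y\<bar> \<le> 3 / y^2" by (rule g_bound[OF y])
  have cy1: "c / y \<le> (1/8) / y" by (rule divide_right_mono) (use c_bounds p in auto)
  have cy: "0 \<le> c / y" "c / y \<le> (1/8) / y" using c_bounds p cy1 by auto
  show ?thesis
  proof (cases "y \<ge> 4")
    case True
    define z where "z = g y - c / y"
    have y2: "3 / y^2 \<le> (3/4) / y"
    proof -
      have "3 / y^2 = (3 / y) / y" by (simp add: power2_eq_square)
      also have "\<dots> \<le> (3/4) / y" using True p by (intro divide_right_mono) (auto simp: field_simps)
      finally show ?thesis .
    qed
    have zb: "\<bar>z\<bar> \<le> (7/8) / y" using gb cy y2 unfolding z_def by (simp add: abs_le_iff) 
    have "(7/8) / y \<le> 1" using True by simp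
    with zb have z1: "\<bar>z\<bar> \<le> 1" by linarith
    have "z^2 \<le> ((7/8) / y)^2" using zb by (metis abs_ge_zero power2_abs power_mono)
    also have "\<dots> = (49/64) / y^2" by (simp add: power_divide)
    also have "\<dots> \<le> 1 / y^2" by (rule divide_right_mono) auto
    finally have zz: "z^2 \<le> 1 / y^2" .
    have lo: "1 + z \<le> exp z" by simp
    have hi: "exp z \<le> 1 + z + z^2" by (rule exp_upper_small[OF z1])
    define w where "w = 1 / y^2"
    have w0: "0 \<le> w" by (simp add: w_def)
    have gb': "\<bar>g y\<bar> \<le> 3 * w" using gb by (simp add: w_def)
    have zz': "z^2 \<le> w" using zz by (simp add: w_def)
    have "\<bar>exp z - 1 + c / y\<bar> \<le> 20 * w"
      using lo hi zz' gb' w0 unfolding z_def abs_le_iff by linarith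
    then show ?thesis by (simp add: z_def w_def)
  next
    case False
    have "exp (g y - c / y) \<le> 1"
      using wendel_upper[OF p] unfolding g_def by simp
    moreover have "0 < exp (g y - c / y)" by simp
    moreover have "(5/4) \<le> 20 / y^2"
    proof -
      have "y^2 \<le> 4^2" using False p by (intro power_mono) auto
      then show ?thesis using p by (simp add: field_simps)
    qed
    moreover have "(1/8) / y \<le> 1/4" using y by (simp add: field_simps)
    ultimately show ?thesis using cy unfolding abs_le_iff by linarith
  qed
qed

lemma gamma_ratio: assumes y: "y \<ge> (1/2::real)"
  shows "\<bar>Gamma (y + a) / Gamma y - y powr a + c * y powr (a - 1)\<bar> \<le> 20 * y powr (a - 2)"
proof -
  have p: "y > 0" using y by simp
  have G: "Gamma y > 0" "Gamma (y + a) > 0" using p a0 by auto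
  have "exp (g y - c / y) * y powr a = exp (ln (Gamma (y + a)) - ln (Gamma y) - a * ln y + a * ln y)"
    using p by (simp add: g_def powr_def exp_add[symmetric])
  also have "\<dots> = Gamma (y + a) / Gamma y" using G by (simp add: exp_diff)
  finally have e: "Gamma (y + a) / Gamma y = exp (g y - c / y) * y powr a" by simp
  have e1: "y powr (a - 1) = y powr a / y" using p by (simp add: powr_diff)
  have e2: "y powr (a - 2) = y powr a / y^2" using p by (simp add: powr_diff powr_realpow)
  have "Gamma (y + a) / Gamma y - y powr a + c * y powr (a - 1) = y powr a * (exp (g y - c / y) - 1 + c / y)"
    unfolding e e1 by (simp add: algebra_simps)
  hence "\<bar>Gamma (y + a) / Gamma y - y powr a + c * y powr (a - 1)\<bar> = y powr a * \<bar>exp (g y - c / y) - 1 + c / y\<bar>"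
    by (simp add: abs_mult)
  also have "\<dots> \<le> y powr a * (20 / y^2)" by (intro mult_left_mono R_bound[OF y]) auto
  also have "\<dots> = 20 * y powr (a - 2)" unfolding e2 by simp
  finally show ?thesis .
qed

end


lemma taylor3_powr:
  fixes a x :: real
  assumes a0: "0 < a" and a1: "a < 1" and x: "x \<ge> 0"
  shows "\<bar>x powr a - 1 - a * (x - 1) + a * (1 - a) / 2 * (x - 1)^2\<bar> \<le> 24 * \<bar>x - 1\<bar>^3"
proof (cases "x < 1/2")
  case True
  have "x powr a \<le> 1" using x True a0 by (intro powr_le1) auto
  moreover have "0 \<le> x powr a" by simp
  moreover have "a * (1 - a) / 2 * (x - 1)^2 \<le> 1"
  proof -
    have "(x - 1)^2 \<le> 1"
    proof -
      have "\<bar>x - 1\<bar> \<le> 1" using x True by simp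
      then have "\<bar>x - 1\<bar>^2 \<le> 1^2" by (intro power_mono) auto
      then show ?thesis by simp
    qed
    moreover have "a * (1 - a) \<le> 1" using a0 a1 by (intro mult_le_one) auto
    ultimately show ?thesis using a0 a1 by (intro mult_le_one) auto
  qed
  moreover have "0 \<le> a * (1 - a) / 2 * (x - 1)^2" using a0 a1 by simp
  moreover have "\<bar>a * (x - 1)\<bar> \<le> 1" using a0 a1 x True by (simp add: abs_mult) (intro mult_le_one, auto)
  moreover have "3 \<le> 24 * \<bar>x - 1\<bar>^3"
  proof -
    have h: "(1/2::real)^3 \<le> \<bar>x - 1\<bar>^3" using True by (intro power_mono) auto
    have "(1/2::real)^3 = 1/8" by (simp add: power_divide)
    then show ?thesis using h by linarith
  qed
  ultimately show ?thesis unfolding abs_le_iff by linarith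
next
  case False
  hence xh: "x \<ge> 1/2" by simp
  define D where "D = (\<lambda>m::nat. \<lambda>t::real. (\<Prod>i<m. (a - real i)) * t powr (a - real m))"
  show ?thesis
  proof (cases "x = 1")
    case True then show ?thesis by simp
  next
    case xne: False
    have "\<exists>t. (if x < 1 then x < t \<and> t < 1 else 1 < t \<and> t < x) \<and>
      x powr a = (\<Sum>m<3. (D m 1 / fact m) * (x - 1)^m) + (D 3 t / fact 3) * (x - 1)^3"
    proof (rule Taylor[of 3 D "\<lambda>x. x powr a" "1/2" "x + 1" 1 x])
      show "D 0 = (\<lambda>x. x powr a)" by (simp add: D_def)
      show "\<forall>(m::nat) t. m < 3 \<and> 1/2 \<le> t \<and> t \<le> x + 1 \<longrightarrow> DERIV (D m) t :> D (Suc m) t"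
      proof (intro allI impI)
        fix m :: nat and t :: real assume h: "m < 3 \<and> 1/2 \<le> t \<and> t \<le> x + 1"
        hence t0: "t > 0" by simp
        have "DERIV (D m) t :> (\<Prod>i<m. (a - real i)) * ((a - real m) * t powr (a - real m - 1))"
          unfolding D_def using t0 by (auto intro!: derivative_eq_intros)
        also have "(\<Prod>i<m. (a - real i)) * ((a - real m) * t powr (a - real m - 1)) = D (Suc m) t"
          by (simp add: D_def algebra_simps)
        finally show "DERIV (D m) t :> D (Suc m) t" .
      qed
    qed (use xh xne in auto)
    then obtain t where t: "(if x < 1 then x < t \<and> t < 1 else 1 < t \<and> t < x)"
      and eq: "x powr a = (\<Sum>m<3. (D m 1 / fact m) * (x - 1)^m) + (D 3 t / fact 3) * (x - 1)^3"
      by blast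
    have th: "t \<ge> 1/2" using t xh by (auto split: if_splits)
    have sum3: "(\<Sum>m<3. (D m 1 / fact m) * (x - 1)^m) = 1 + a * (x - 1) - a * (1 - a) / 2 * (x - 1)^2"
      by (simp add: D_def eval_nat_numeral power2_eq_square field_simps)
    have "\<bar>D 3 t\<bar> \<le> 16"
    proof -
      have p3: "\<bar>\<Prod>i<3. (a - real i)\<bar> \<le> 2"
      proof -
        have "(\<Prod>i<3. (a - real i)) = a * (a - 1) * (a - 2)" by (simp add: eval_nat_numeral)
        moreover have "\<bar>a * (a - 1) * (a - 2)\<bar> = a * (1 - a) * (2 - a)" using a0 a1 by (simp add: abs_mult)
        moreover have "a * (1 - a) * (2 - a) \<le> 1 * 1 * 2" using a0 a1 by (intro mult_mono) auto
        ultimately show ?thesis by simp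
      qed
      have "t powr (a - 3) \<le> (1/2) powr (a - 3)" using th a1 by (intro powr_mono2') auto
      also have "(1/2::real) powr (a - 3) = 2 powr (3 - a)" by (simp add: powr_divide powr_minus_divide[symmetric] powr_minus)
      also have "\<dots> \<le> 2 powr 3" using a0 by (intro powr_mono) auto
      finally have tp: "t powr (a - 3) \<le> 8" by simp
      have "\<bar>D 3 t\<bar> = \<bar>\<Prod>i<3. (a - real i)\<bar> * t powr (a - 3)" by (simp add: D_def abs_mult)
      also have "\<dots> \<le> 2 * 8" using p3 tp by (intro mult_mono) auto
      finally show ?thesis by simp
    qed
    hence "\<bar>D 3 t\<bar> / 6 \<le> 24" by simp
    hence "\<bar>D 3 t\<bar> / 6 * \<bar>x - 1\<bar>^3 \<le> 24 * \<bar>x - 1\<bar>^3" by (intro mult_right_mono) auto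
    moreover have "\<bar>(D 3 t / fact 3) * (x - 1)^3\<bar> = \<bar>D 3 t\<bar> / 6 * \<bar>x - 1\<bar>^3"
      by (simp add: abs_mult power_abs fact_numeral)
    ultimately have "\<bar>(D 3 t / fact 3) * (x - 1)^3\<bar> \<le> 24 * \<bar>x - 1\<bar>^3" by linarith
    then show ?thesis using eq sum3 by simp
  qed
qed



lemma h_bin_nonneg: "0 \<le> q \<Longrightarrow> q \<le> 1 \<Longrightarrow> 0 \<le> h_bin q d t"
  unfolding h_bin_def by simp

lemma EB_mono: assumes "0 \<le> q" "q \<le> 1" "\<And>t. t \<le> d \<Longrightarrow> f t \<le> g t"
  shows "EB q d f \<le> EB q d g"
  unfolding EB_def by (intro sum_mono mult_left_mono) (use assms h_bin_nonneg in auto)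

lemma EB_abs: assumes "0 \<le> q" "q \<le> 1" shows "\<bar>EB q d f\<bar> \<le> EB q d (\<lambda>t. \<bar>f t\<bar>)"
proof -
  have "\<bar>EB q d f\<bar> \<le> (\<Sum>t\<le>d. \<bar>h_bin q d t * f t\<bar>)" unfolding EB_def by (rule sum_abs)
  also have "\<dots> = EB q d (\<lambda>t. \<bar>f t\<bar>)" unfolding EB_def using h_bin_nonneg[OF assms] by (simp add: abs_mult)
  finally show ?thesis .
qed

lemma EB_cong: "(\<And>t. t \<le> d \<Longrightarrow> f t = g t) \<Longrightarrow> EB q d f = EB q d g"
  unfolding EB_def by (intro sum.cong) auto

lemma cube_amgm: assumes "(e::real) > 0" shows "\<bar>y\<bar>^3 \<le> e * y^2 + y^4 / e"
proof -
  have "0 \<le> (e - \<bar>y\<bar>/2)^2 + 3 * y^2 / 4" by simp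
  hence "0 \<le> e^2 - e * \<bar>y\<bar> + y^2" by (simp add: power2_eq_square algebra_simps)
  hence "0 \<le> y^2 * (e^2 - e * \<bar>y\<bar> + y^2)" by simp
  hence "e * \<bar>y\<bar>^3 \<le> e^2 * y^2 + y^4"
    by (simp add: power2_eq_square power3_eq_cube power4_eq_xxxx algebra_simps abs_mult_self_eq)
  then show ?thesis using assms by (simp add: field_simps power2_eq_square power3_eq_cube)
qed

lemma abs_amgm: assumes "(e::real) > 0" shows "\<bar>y\<bar> \<le> e + y^2 / e"
proof (cases "\<bar>y\<bar> \<le> e")
  case False
  hence "\<bar>y\<bar> * e \<le> \<bar>y\<bar> * \<bar>y\<bar>" using assms by (intro mult_left_mono) auto
  hence "\<bar>y\<bar> \<le> y^2 / e" using assms by (simp add: field_simps power2_eq_square)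
  then show ?thesis using assms by simp
qed (use assms in \<open>auto intro: add_increasing2\<close>)

locale stp = gam +
  fixes q :: real
  assumes q0: "0 < q" and q1: "q \<le> 1"
begin

definition mm :: "nat \<Rightarrow> real" where "mm d = real d * q"

lemma d_ge: "mm d \<ge> 1 \<Longrightarrow> d \<ge> 1"
  by (cases d) (auto simp: mm_def)

lemma mm_pos: "mm d \<ge> 1 \<Longrightarrow> mm d > 0" by simp

lemma mom1: "EB q d (\<lambda>t. real t / mm d - 1) = 0" if "mm d \<ge> 1"
proof -
  have "EB q d (\<lambda>t. real t / mm d - 1) = EB q d (\<lambda>t. (1 / mm d) * (real t - real d * q))"
    proof (rule EB_cong)
    fix t assume "t \<le> d"
    have "mm d \<noteq> 0" using that by auto
    then show "real t / mm d - 1 = (1 / mm d) * (real t - real d * q)" by (simp add: mm_def field_simps)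
  qed
  also have "\<dots> = (1 / mm d) * EB q d (\<lambda>t. real t - real d * q)" by (rule EB_lin(2))
  also have "\<dots> = 0" by (simp add: EB_mean)
  finally show ?thesis .
qed

lemma mom2: "EB q d (\<lambda>t. (real t / mm d - 1)^2) = (1 - q) / mm d" if "mm d \<ge> 1"
proof -
  have "EB q d (\<lambda>t. (real t / mm d - 1)^2) = EB q d (\<lambda>t. (1 / mm d ^ 2) * (real t - real d * q)^2)"
    proof (rule EB_cong)
    fix t assume "t \<le> d"
    have "mm d \<noteq> 0" using that by auto
    then show "(real t / mm d - 1)^2 = (1 / mm d ^ 2) * (real t - real d * q)^2" by (simp add: mm_def field_simps)
  qed
  also have "\<dots> = (1 / mm d ^ 2) * EB q d (\<lambda>t. (real t - real d * q)^2)" by (rule EB_lin(2))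
  also have "\<dots> = (1 - q) / mm d"
  proof -
    have "real d \<noteq> 0" "q \<noteq> 0" using d_ge[OF that] q0 by auto
    then show ?thesis by (simp only: EB_var) (simp add: mm_def power2_eq_square field_simps)
  qed
  finally show ?thesis .
qed

lemma mom4: "EB q d (\<lambda>t. (real t / mm d - 1)^4) \<le> 4 / mm d ^ 2" if m1: "mm d \<ge> 1"
proof -
  define v where "v = q * (1 - q)"
  have v: "0 \<le> v" "v \<le> q" using q0 q1 by (auto simp: v_def mult_le_cancel_left1)
  have d1: "real d \<ge> 1" using d_ge[OF m1] by simp
  have "EB q d (\<lambda>t. (real t / mm d - 1)^4) = EB q d (\<lambda>t. (1 / mm d ^ 4) * (real t - real d * q)^4)"
    proof (rule EB_cong)
    fix t assume "t \<le> d"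
    have "mm d \<noteq> 0" using m1 by auto
    then show "(real t / mm d - 1)^4 = (1 / mm d ^ 4) * (real t - real d * q)^4" by (simp add: mm_def field_simps)
  qed
  also have "\<dots> = (3 * real d * (real d - 1) * v^2 + real d * v * (1 - 3 * v)) / mm d ^ 4"
    by (subst EB_lin(2)) (simp add: EB_m4 v_def)
  also have "\<dots> \<le> 4 / mm d ^ 2"
  proof -
    have "3 * real d * (real d - 1) * v^2 \<le> 3 * (real d * q)^2"
    proof -
      have "real d * (real d - 1) \<le> real d * real d" using d1 by (intro mult_left_mono) auto
      moreover have "v^2 \<le> q^2" using v by (intro power_mono) auto
      ultimately have "real d * (real d - 1) * v^2 \<le> real d * real d * q^2"
        using d1 v by (intro mult_mono) auto
      then show ?thesis by (simp add: power2_eq_square algebra_simps)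
    qed
    moreover have "real d * v * (1 - 3 * v) \<le> real d * q"
    proof -
      have "real d * v * (1 - 3 * v) \<le> real d * v * 1" using d1 v by (intro mult_left_mono) auto
      also have "\<dots> \<le> real d * q" using d1 v by (simp add: mult_left_mono)
      finally show ?thesis .
    qed
    moreover have "mm d \<le> mm d ^ 2" using m1 by (simp add: power2_eq_square)
    ultimately have num: "3 * real d * (real d - 1) * v^2 + real d * v * (1 - 3 * v) \<le> 4 * mm d ^ 2"
      unfolding mm_def by linarith
    have "(3 * real d * (real d - 1) * v^2 + real d * v * (1 - 3 * v)) / mm d ^ 4 \<le> 4 * mm d ^ 2 / mm d ^ 4"
      using m1 num by (intro divide_right_mono) auto
    also have "\<dots> = 4 / mm d ^ 2" using m1 by (simp add: field_simps power2_eq_square power4_eq_xxxx)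
    finally show ?thesis .
  qed
  finally show ?thesis .
qed

lemma B1: assumes m1: "mm d \<ge> 1"
  shows "\<bar>mm d * (EB q d (\<lambda>t. (real t / mm d) powr a) - 1) + c * (1 - q)\<bar> \<le> 120 / sqrt (mm d)"
proof -
  define m where "m = mm d"
  have m0: "m > 0" "m \<ge> 1" using m1 by (auto simp: m_def)
  define X where "X = (\<lambda>t. (real t / m) powr a)"
  define Y where "Y = (\<lambda>t. real t / m - 1)"
  define F where "F = (\<lambda>t. X t - 1 - a * Y t + c * (Y t)^2)"
  have EY: "EB q d Y = 0" using mom1[OF m1] by (simp add: Y_def m_def)
  have EY2: "EB q d (\<lambda>t. (Y t)^2) = (1 - q) / m" using mom2[OF m1] by (simp add: Y_def m_def)
  have EY4: "EB q d (\<lambda>t. (Y t)^4) \<le> 4 / m^2" using mom4[OF m1] by (simp add: Y_def m_def)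
  have eF: "EB q d F = EB q d X - 1 - a * EB q d Y + c * EB q d (\<lambda>t. (Y t)^2)"
    unfolding F_def by (simp only: EB_lin EB_const)
  hence eF': "m * (EB q d X - 1) + c * (1 - q) = m * EB q d F"
    using EY EY2 m0 by (simp add: field_simps)
  define e where "e = 1 / sqrt m"
  have e0: "e > 0" using m0 by (simp add: e_def)
  have Fb: "\<bar>F t\<bar> \<le> 24 * (e * (Y t)^2 + (Y t)^4 / e)" for t
  proof -
    have "\<bar>F t\<bar> \<le> 24 * \<bar>Y t\<bar>^3" unfolding F_def X_def Y_def c_def
      using taylor3_powr[OF a0 a1, of "real t / m"] m0 by simp
    also have "\<dots> \<le> 24 * (e * (Y t)^2 + (Y t)^4 / e)" using cube_amgm[OF e0, of "Y t"] by simp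
    finally show ?thesis .
  qed
  have "\<bar>EB q d F\<bar> \<le> EB q d (\<lambda>t. \<bar>F t\<bar>)" using EB_abs q0 q1 by simp
  also have "\<dots> \<le> EB q d (\<lambda>t. 24 * (e * (Y t)^2 + (1 / e) * (Y t)^4))"
    using Fb q0 q1 by (intro EB_mono) auto
  also have "\<dots> = 24 * (e * EB q d (\<lambda>t. (Y t)^2) + (1 / e) * EB q d (\<lambda>t. (Y t)^4))"
    by (simp only: EB_lin)
  also have "\<dots> \<le> 24 * (e * (1 / m) + (1 / e) * (4 / m^2))"
  proof -
    have "(1 - q) / m \<le> 1 / m" using q0 m0 by (intro divide_right_mono) auto
    hence "e * EB q d (\<lambda>t. (Y t)^2) \<le> e * (1 / m)" using EY2 e0 by (intro mult_left_mono) auto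
    moreover have "(1 / e) * EB q d (\<lambda>t. (Y t)^4) \<le> (1 / e) * (4 / m^2)" using EY4 e0 by (intro mult_left_mono) auto
    ultimately show ?thesis by simp
  qed
  finally have bF: "\<bar>EB q d F\<bar> \<le> 24 * (e * (1 / m) + (1 / e) * (4 / m^2))" .
  have sq: "sqrt m * sqrt m = m" using m0 by simp
  have "\<bar>m * EB q d F\<bar> \<le> m * (24 * (e * (1 / m) + (1 / e) * (4 / m^2)))"
    using bF m0 by (simp add: abs_mult mult_left_mono)
  also have "\<dots> = 120 / sqrt m" unfolding e_def using m0 sq
    by (simp add: field_simps power2_eq_square)
  finally show ?thesis using eF' by (simp add: m_def X_def)
qed

end


context stp begin

lemma pw2: assumes m1: "m \<ge> (1::real)"
  shows "\<bar>(real t / m) powr (a - 1) - 1\<bar> \<le> 2 * \<bar>real t / m - 1\<bar> + 4 * (m powr (1 - a) + 1) * (real t / m - 1)^2"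
proof -
  define x where "x = real t / m"
  define M where "M = m powr (1 - a)"
  have M0: "M > 0" using m1 by (simp add: M_def)
  have x0: "x \<ge> 0" using m1 by (simp add: x_def)
  have sq0: "0 \<le> 4 * (M + 1) * (x - 1)^2" using M0 by simp
  have "\<bar>x powr (a - 1) - 1\<bar> \<le> 2 * \<bar>x - 1\<bar> + 4 * (M + 1) * (x - 1)^2"
  proof (cases "x \<ge> 1")
    case True
    have u: "x powr (a - 1) \<le> 1" using powr_mono2'[of "a - 1" 1 x] True a1 by simp
    have "x powr (-1) \<le> x powr (a - 1)" using True a0 by (intro powr_mono) auto
    hence l: "1 / x \<le> x powr (a - 1)" using True by (simp add: powr_minus_divide)
    have "1 - 1 / x \<le> x - 1"
    proof -
      have "0 \<le> (x - 1)^2" by simp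
      hence "x * 2 \<le> 1 + x * x" by (simp add: power2_eq_square algebra_simps)
      then show ?thesis using True by (simp add: field_simps)
    qed
    then show ?thesis using u l sq0 by (simp add: abs_le_iff)
  next
    case False
    show ?thesis
    proof (cases "x \<ge> 1/2")
      case True
      have xp: "x > 0" using True by simp
      have l: "1 \<le> x powr (a - 1)" using powr_mono2'[of "a - 1" x 1] False xp a1 by simp
      have "x powr (a - 1) \<le> x powr (-1)" using False True a0 by (intro powr_mono') auto
      hence u: "x powr (a - 1) \<le> 1 / x" using xp by (simp add: powr_minus_divide)
      have "1 / x - 1 \<le> 2 * (1 - x)"
      proof -
        have "1 * (1 - x) \<le> (2 * x) * (1 - x)" using True False by (intro mult_right_mono) auto
        hence "1 - x \<le> 2 * x * (1 - x)" by simp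
        then show ?thesis using xp by (simp add: field_simps)
      qed
      then show ?thesis using u l sq0 False by (simp add: abs_le_iff)
    next
      case False2: False
      have y2: "1/4 \<le> (x - 1)^2"
      proof -
        have "(1/2)^2 \<le> \<bar>x - 1\<bar>^2" using False2 by (intro power_mono) auto
        then show ?thesis by (simp add: power_divide)
      qed
      have fb: "0 \<le> x powr (a - 1)" "x powr (a - 1) \<le> M"
      proof -
        show "0 \<le> x powr (a - 1)" by simp
        show "x powr (a - 1) \<le> M"
        proof (cases "t = 0")
          case True then show ?thesis using M0 by (simp add: x_def)
        next
          case tne: False
          hence t1: "real t \<ge> 1" by simp
          have "x powr (a - 1) = real t powr (a - 1) / m powr (a - 1)" by (simp add: x_def powr_divide)
          also have "real t powr (a - 1) \<le> 1" using powr_mono2'[of "a - 1" 1 "real t"] t1 a1 by simp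
          hence "real t powr (a - 1) / m powr (a - 1) \<le> 1 / m powr (a - 1)" using m1 by (intro divide_right_mono) auto
          also have "1 / m powr (a - 1) = M" unfolding M_def by (simp add: powr_minus_divide[symmetric])
          finally show ?thesis .
        qed
      qed
      have "(M + 1) * 1 \<le> (M + 1) * (4 * (x - 1)^2)" using y2 M0 by (intro mult_left_mono) auto
      hence "M + 1 \<le> 4 * (M + 1) * (x - 1)^2" by (simp add: algebra_simps)
      moreover have "0 \<le> 2 * \<bar>x - 1\<bar>" by simp
      ultimately show ?thesis using fb M0 by (simp only: abs_le_iff) linarith
    qed
  qed
  then show ?thesis by (simp add: x_def M_def)
qed

lemma B2: assumes m1: "mm d \<ge> 1"
  shows "\<bar>EB q d (\<lambda>t. (real t / mm d) powr (a - 1)) - 1\<bar> \<le> 4 / sqrt (mm d) + 4 * (mm d powr (1 - a) + 1) / mm d"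
proof -
  define m where "m = mm d"
  have m0: "m > 0" "m \<ge> 1" using m1 by (auto simp: m_def)
  define M where "M = m powr (1 - a)"
  have M0: "M > 0" using m0 by (simp add: M_def)
  define Y where "Y = (\<lambda>t. real t / m - 1)"
  have EY2: "EB q d (\<lambda>t. (Y t)^2) = (1 - q) / m" using mom2[OF m1] by (simp add: Y_def m_def)
  define e where "e = 1 / sqrt m"
  have e0: "e > 0" using m0 by (simp add: e_def)
  have pb: "\<bar>(real t / m) powr (a - 1) - 1\<bar> \<le> 2 * e + (2 / e + 4 * (M + 1)) * (Y t)^2" for t
  proof -
    have "\<bar>(real t / m) powr (a - 1) - 1\<bar> \<le> 2 * \<bar>Y t\<bar> + 4 * (M + 1) * (Y t)^2"
      using pw2[OF m0(2), of t] by (simp add: Y_def M_def)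
    also have "\<dots> \<le> 2 * (e + (Y t)^2 / e) + 4 * (M + 1) * (Y t)^2" using abs_amgm[OF e0, of "Y t"] by simp
    also have "\<dots> = 2 * e + (2 / e + 4 * (M + 1)) * (Y t)^2" by (simp add: algebra_simps)
    finally show ?thesis .
  qed
  have "EB q d (\<lambda>t. (real t / m) powr (a - 1)) - 1 = EB q d (\<lambda>t. (real t / m) powr (a - 1) - 1)"
    by (simp only: EB_lin EB_const)
  hence "\<bar>EB q d (\<lambda>t. (real t / m) powr (a - 1)) - 1\<bar> \<le> EB q d (\<lambda>t. \<bar>(real t / m) powr (a - 1) - 1\<bar>)"
    using EB_abs q0 q1 by simp
  also have "\<dots> \<le> EB q d (\<lambda>t. 2 * e + (2 / e + 4 * (M + 1)) * (Y t)^2)"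
    using pb q0 q1 by (intro EB_mono) auto
  also have "\<dots> = 2 * e + (2 / e + 4 * (M + 1)) * EB q d (\<lambda>t. (Y t)^2)"
    by (simp only: EB_lin EB_const)
  also have "\<dots> \<le> 2 * e + (2 / e + 4 * (M + 1)) * (1 / m)"
  proof -
    have "(1 - q) / m \<le> 1 / m" using q0 m0 by (intro divide_right_mono) auto
    moreover have "0 \<le> 2 / e + 4 * (M + 1)" using e0 M0 by simp
    ultimately have "(2 / e + 4 * (M + 1)) * ((1 - q) / m) \<le> (2 / e + 4 * (M + 1)) * (1 / m)"
      by (rule mult_left_mono)
    then show ?thesis unfolding EY2 by linarith
  qed
  also have "\<dots> = 4 / sqrt m + 4 * (M + 1) / m"
  proof -
    have sq: "sqrt m * sqrt m = m" using m0 by simp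
    show ?thesis unfolding e_def using m0 sq by (simp add: field_simps)
  qed
  finally show ?thesis by (simp add: m_def M_def)
qed

lemma pw3: assumes m1: "m \<ge> (1::real)"
  shows "m powr (1 - a) * real t powr (a - 2) \<le> 4 / m + 4 * m powr (1 - a) * (real t / m - 1)^2"
proof -
  define x where "x = real t / m"
  define M where "M = m powr (1 - a)"
  have M0: "M > 0" using m1 by (simp add: M_def)
  show ?thesis
  proof (cases "t = 0")
    case True then show ?thesis using m1 M0 by simp
  next
    case tne: False
    hence t1: "real t \<ge> 1" by simp
    show ?thesis
    proof (cases "x \<ge> 1/2")
      case True
      have "real t = x * m" using m1 by (simp add: x_def)
      hence "m powr (1 - a) * real t powr (a - 2) = x powr (a - 2) * (m powr (1 - a) * m powr (a - 2))"
        by (simp add: powr_mult)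
      also have "m powr (1 - a) * m powr (a - 2) = 1 / m" using m1
        by (simp add: powr_add[symmetric] powr_minus_divide[symmetric])
      also have "x powr (a - 2) \<le> 4"
      proof -
        have "x powr (a - 2) \<le> (1/2) powr (a - 2)" using True a1 by (intro powr_mono2') auto
        also have "(1/2::real) powr (a - 2) = 2 powr (2 - a)" by (simp add: powr_divide powr_minus_divide[symmetric])
        also have "\<dots> \<le> 2 powr 2" using a0 by (intro powr_mono) auto
        finally show ?thesis by simp
      qed
      hence "x powr (a - 2) * (1 / m) \<le> 4 * (1 / m)" using m1 by (intro mult_right_mono) auto
      finally have "m powr (1 - a) * real t powr (a - 2) \<le> 4 / m" by simp
      moreover have "0 \<le> 4 * m powr (1 - a) * (real t / m - 1)^2" by simp
      ultimately show ?thesis by linarith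
    next
      case False
      have y2: "1/4 \<le> (x - 1)^2"
      proof -
        have "(1/2)^2 \<le> \<bar>x - 1\<bar>^2" using False by (intro power_mono) auto
        then show ?thesis by (simp add: power_divide)
      qed
      have "real t powr (a - 2) \<le> 1" using powr_mono2'[of "a - 2" 1 "real t"] t1 a1 by simp
      hence "m powr (1 - a) * real t powr (a - 2) \<le> M * 1" using M0 by (simp add: M_def mult_left_mono)
      also have "M * 1 \<le> M * (4 * (x - 1)^2)" using y2 M0 by (intro mult_left_mono) auto
      finally have h: "m powr (1 - a) * real t powr (a - 2) \<le> M * (4 * (x - 1)^2)" .
      have "M * (4 * (x - 1)^2) = 4 * m powr (1 - a) * (real t / m - 1)^2" by (simp add: M_def x_def)
      moreover have "0 \<le> 4 / m" using m1 by simp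
      ultimately show ?thesis using h by linarith
    qed
  qed
qed

lemma B3: assumes m1: "mm d \<ge> 1" and E: "\<And>t. \<bar>E t\<bar> \<le> 80 * real t powr (a - 2)"
  shows "\<bar>mm d powr (1 - a) * EB q d E\<bar> \<le> 320 * (1 + mm d powr (1 - a)) / mm d"
proof -
  define m where "m = mm d"
  have m0: "m > 0" "m \<ge> 1" using m1 by (auto simp: m_def)
  define M where "M = m powr (1 - a)"
  have M0: "M > 0" using m0 by (simp add: M_def)
  define Y where "Y = (\<lambda>t. real t / m - 1)"
  have EY2: "EB q d (\<lambda>t. (Y t)^2) = (1 - q) / m" using mom2[OF m1] by (simp add: Y_def m_def)
  have "\<bar>M * EB q d E\<bar> = M * \<bar>EB q d E\<bar>" using M0 by (simp add: abs_mult)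
  also have "\<dots> \<le> M * EB q d (\<lambda>t. \<bar>E t\<bar>)" using EB_abs q0 q1 M0 by (intro mult_left_mono) auto
  also have "\<dots> = EB q d (\<lambda>t. M * \<bar>E t\<bar>)" by (simp only: EB_lin)
  also have "\<dots> \<le> EB q d (\<lambda>t. 320 / m + (320 * M) * (Y t)^2)"
  proof (rule EB_mono)
    fix t
    have "M * \<bar>E t\<bar> \<le> M * (80 * real t powr (a - 2))" using E M0 by (intro mult_left_mono) auto
    also have "\<dots> = 80 * (m powr (1 - a) * real t powr (a - 2))" by (simp add: M_def)
    also have "\<dots> \<le> 80 * (4 / m + 4 * m powr (1 - a) * (real t / m - 1)^2)"
      using pw3[OF m0(2), of t] by simp
    also have "\<dots> = 320 / m + (320 * M) * (Y t)^2" by (simp add: M_def Y_def)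
    finally show "M * \<bar>E t\<bar> \<le> 320 / m + (320 * M) * (Y t)^2" .
  qed (use q0 q1 in auto)
  also have "\<dots> = 320 / m + (320 * M) * EB q d (\<lambda>t. (Y t)^2)" by (simp only: EB_lin EB_const)
  also have "\<dots> \<le> 320 / m + (320 * M) * (1 / m)"
  proof -
    have "(1 - q) / m \<le> 1 / m" using q0 m0 by (intro divide_right_mono) auto
    hence "(320 * M) * ((1 - q) / m) \<le> (320 * M) * (1 / m)" using M0 by (intro mult_left_mono) auto
    then show ?thesis unfolding EY2 by linarith
  qed
  also have "\<dots> = 320 * (1 + M) / m" using m0 by (simp add: field_simps)
  finally show ?thesis by (simp add: m_def M_def)
qed

end


context stp begin

definition Et :: "nat \<Rightarrow> real" where
  "Et t = 2 powr a * (Gamma (real t / 2 + a) / Gamma (real t / 2)) - real t powr a + 2 * c * real t powr (a - 1)"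

lemma Et_bound: "\<bar>Et t\<bar> \<le> 80 * real t powr (a - 2)"
proof (cases "t = 0")
  case True then show ?thesis by (simp add: Et_def)
next
  case False
  define y where "y = real t / 2"
  have y: "y \<ge> 1/2" using False by (simp add: y_def)
  have tp: "real t > 0" using False by simp
  have p1: "2 powr a * y powr a = real t powr a" by (simp add: y_def powr_divide)
  have p2: "2 powr a * y powr (a - 1) = 2 * real t powr (a - 1)"
    by (simp add: y_def powr_divide powr_diff)
  have p3: "2 powr a * y powr (a - 2) = 4 * real t powr (a - 2)"
    by (simp add: y_def powr_divide powr_diff)
  have "Et t = 2 powr a * (Gamma (y + a) / Gamma y - y powr a + c * y powr (a - 1))"
    unfolding Et_def y_def[symmetric] using p1 p2 by (simp add: algebra_simps)
  hence "\<bar>Et t\<bar> = 2 powr a * \<bar>Gamma (y + a) / Gamma y - y powr a + c * y powr (a - 1)\<bar>" by (simp add: abs_mult)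
  also have "\<dots> \<le> 2 powr a * (20 * y powr (a - 2))" by (intro mult_left_mono gamma_ratio[OF y]) auto
  also have "\<dots> = 80 * real t powr (a - 2)" using p3 by (simp add: algebra_simps)
  finally show ?thesis .
qed

lemma sum_shift0: "(\<Sum>t=1..d. f t) = (\<Sum>t\<le>d. f t) - f 0" for f :: "nat \<Rightarrow> real"
proof -
  have "{..d} = insert 0 {1..d}" by auto
  then show ?thesis by simp
qed

lemma I_decomp: assumes m1: "mm d \<ge> 1"
  shows "(q / real d) powr a * I1q q (2 * a) d =
    EB q d (\<lambda>t. (real t / mm d) powr a) - (2 * c / mm d) * EB q d (\<lambda>t. (real t / mm d) powr (a - 1))
    + mm d powr (-a) * EB q d Et"
proof -
  define m where "m = mm d"
  have m0: "m > 0" using m1 by (simp add: m_def)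
  have d0: "real d > 0" using d_ge[OF m1] by simp
  have sum: "(\<Sum>t=1..d. h_bin q d t * Gamma (real t / 2 + 2 * a / 2) / Gamma (real t / 2))
      = EB q d (\<lambda>t. Gamma (real t / 2 + a) / Gamma (real t / 2))"
    unfolding EB_def by (subst sum_shift0) (simp add: mult.assoc)
  have pt: "2 powr a * (Gamma (real t / 2 + a) / Gamma (real t / 2))
      = m powr a * (real t / m) powr a - (2 * c) * (m powr (a - 1) * (real t / m) powr (a - 1)) + Et t" for t
  proof -
    have "m powr a * (real t / m) powr a = real t powr a" using m0 by (simp add: powr_divide)
    moreover have "m powr (a - 1) * (real t / m) powr (a - 1) = real t powr (a - 1)" using m0 by (simp add: powr_divide)
    ultimately show ?thesis by (simp add: Et_def)
  qed
  have "EB q d (\<lambda>t. 2 powr a * (Gamma (real t / 2 + a) / Gamma (real t / 2)))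
      = m powr a * EB q d (\<lambda>t. (real t / m) powr a) - (2 * c) * (m powr (a - 1) * EB q d (\<lambda>t. (real t / m) powr (a - 1))) + EB q d Et"
    unfolding pt by (simp only: EB_lin)
  hence E2: "2 powr a * EB q d (\<lambda>t. Gamma (real t / 2 + a) / Gamma (real t / 2))
      = m powr a * EB q d (\<lambda>t. (real t / m) powr a) - (2 * c) * (m powr (a - 1) * EB q d (\<lambda>t. (real t / m) powr (a - 1))) + EB q d Et"
    by (simp only: EB_lin)
  have "(q / real d) powr a * I1q q (2 * a) d = ((q / real d) powr a * q powr (- (2 * a))) * (2 powr a * EB q d (\<lambda>t. Gamma (real t / 2 + a) / Gamma (real t / 2)))"
    unfolding I1q_def sum by (simp add: mult_ac)
  also have "(q / real d) powr a * q powr (- (2 * a)) = m powr (- a)"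
  proof -
    have "(q / real d) powr a * q powr (- (2 * a)) = q powr a / real d powr a * (1 / (q powr a * q powr a))"
      using q0 d0 by (simp add: powr_divide powr_minus_divide powr_add[symmetric])
    also have "\<dots> = 1 / (q powr a * real d powr a)" using q0 d0 by (simp add: field_simps)
    also have "\<dots> = m powr (- a)" using q0 d0 by (simp add: m_def mm_def powr_mult powr_minus_divide mult.commute)
    finally show ?thesis .
  qed
  also note E2
  also have "m powr (- a) * (m powr a * EB q d (\<lambda>t. (real t / m) powr a) - (2 * c) * (m powr (a - 1) * EB q d (\<lambda>t. (real t / m) powr (a - 1))) + EB q d Et)
     = EB q d (\<lambda>t. (real t / m) powr a) - (2 * c / m) * EB q d (\<lambda>t. (real t / m) powr (a - 1)) + m powr (-a) * EB q d Et"
  proof -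
    have "m powr (- a) * m powr a = 1" using m0 by (simp add: powr_add[symmetric])
    moreover have "m powr (- a) * m powr (a - 1) = 1 / m"
    proof -
      have "m powr (a - 1) = m powr a / m" using m0 by (simp add: powr_diff)
      moreover have "m powr a > 0" using m0 by simp
      ultimately show ?thesis using m0 by (simp add: powr_minus_divide)
    qed
    moreover have "\<And>P Q1 Q2 X1 X2 X3::real. P * (Q1 * X1 - (2 * c) * (Q2 * X2) + X3) = (P * Q1) * X1 - 2 * c * ((P * Q2) * X2) + P * X3"
      by (simp add: algebra_simps)
    ultimately show ?thesis by (simp only: mult.commute[of "m powr a"]) simp
  qed
  finally show ?thesis by (simp add: m_def)
qed

end


lemma tendsto_bound:
  fixes f u :: "nat \<Rightarrow> real"
  assumes "eventually (\<lambda>n. \<bar>f n - L\<bar> \<le> u n) sequentially" "(u \<longlongrightarrow> 0) sequentially"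
  shows "(f \<longlongrightarrow> L) sequentially"
proof (rule tendsto_sandwich[of "\<lambda>n. L - u n" f sequentially "\<lambda>n. L + u n"])
  show "eventually (\<lambda>n. L - u n \<le> f n) sequentially" using assms(1) by eventually_elim auto
  show "eventually (\<lambda>n. f n \<le> L + u n) sequentially" using assms(1) by eventually_elim auto
  show "((\<lambda>n. L - u n) \<longlongrightarrow> L) sequentially" using tendsto_diff[OF tendsto_const assms(2), of L] by simp
  show "((\<lambda>n. L + u n) \<longlongrightarrow> L) sequentially" using tendsto_add[OF tendsto_const assms(2), of L] by simp
qed

context stp begin

lemma mm_top: "filterlim mm at_top sequentially"
proof -
  have "LIM x sequentially. q * real x :> at_top"
    by (rule filterlim_tendsto_pos_mult_at_top[OF tendsto_const q0 filterlim_real_sequentially])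
  then show ?thesis unfolding mm_def by (simp add: mult.commute)
qed

lemma ev_m1: "eventually (\<lambda>d. mm d \<ge> 1) sequentially"
  using mm_top unfolding filterlim_at_top by blast

lemma lim_pow: "e < 0 \<Longrightarrow> ((\<lambda>d. mm d powr e) \<longlongrightarrow> 0) sequentially"
  by (rule tendsto_neg_powr[OF _ mm_top])

lemma lim_u1: "((\<lambda>d. 120 / sqrt (mm d)) \<longlongrightarrow> 0) sequentially"
proof -
  have "((\<lambda>d. 120 * mm d powr (-1/2)) \<longlongrightarrow> 120 * 0) sequentially"
    by (intro tendsto_mult tendsto_const lim_pow) auto
  moreover have "eventually (\<lambda>d. 120 * mm d powr (-1/2) = 120 / sqrt (mm d)) sequentially"
    using ev_m1 by eventually_elim (simp add: powr_minus_divide powr_half_sqrt)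
  ultimately show ?thesis using Lim_transform_eventually by fastforce
qed

lemma lim_u2: "((\<lambda>d. 4 / sqrt (mm d) + 4 * (mm d powr (1 - a) + 1) / mm d) \<longlongrightarrow> 0) sequentially"
proof -
  have "((\<lambda>d. 4 * mm d powr (-1/2) + 4 * mm d powr (-a) + 4 * mm d powr (-1)) \<longlongrightarrow> 4 * 0 + 4 * 0 + 4 * 0) sequentially"
    using a0 by (intro tendsto_add tendsto_mult tendsto_const lim_pow) auto
  moreover have "eventually (\<lambda>d. 4 * mm d powr (-1/2) + 4 * mm d powr (-a) + 4 * mm d powr (-1) =
      4 / sqrt (mm d) + 4 * (mm d powr (1 - a) + 1) / mm d) sequentially"
    using ev_m1
  proof eventually_elim
    case (elim d)
    have m0: "mm d > 0" using elim by simp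
    have "mm d powr (1 - a) / mm d = mm d powr (-a)" using m0 by (simp add: powr_diff powr_minus_divide)
    then show ?case using m0 by (simp add: powr_minus_divide powr_half_sqrt add_divide_distrib distrib_left)
  qed
  ultimately show ?thesis by (simp add: tendsto_cong)
qed

lemma lim_u3: "((\<lambda>d. 320 * (1 + mm d powr (1 - a)) / mm d) \<longlongrightarrow> 0) sequentially"
proof -
  have "((\<lambda>d. 320 * mm d powr (-1) + 320 * mm d powr (-a)) \<longlongrightarrow> 320 * 0 + 320 * 0) sequentially"
    using a0 by (intro tendsto_add tendsto_mult tendsto_const lim_pow) auto
  moreover have "eventually (\<lambda>d. 320 * mm d powr (-1) + 320 * mm d powr (-a) =
      320 * (1 + mm d powr (1 - a)) / mm d) sequentially"
    using ev_m1
  proof eventually_elim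
    case (elim d)
    have m0: "mm d > 0" using elim by simp
    have "mm d powr (1 - a) / mm d = mm d powr (-a)" using m0 by (simp add: powr_diff powr_minus_divide)
    then show ?case using m0 by (simp add: powr_minus_divide add_divide_distrib distrib_left)
  qed
  ultimately show ?thesis by (simp add: tendsto_cong)
qed

definition W :: "nat \<Rightarrow> real" where "W d = (q / real d) powr a * I1q q (2 * a) d"

lemma Z_lim: "((\<lambda>d. real d * (W d - 1)) \<longlongrightarrow> - (c * (3 - q) / q)) sequentially"
proof -
  define X1 where "X1 = (\<lambda>d. EB q d (\<lambda>t. (real t / mm d) powr a))"
  define X2 where "X2 = (\<lambda>d. EB q d (\<lambda>t. (real t / mm d) powr (a - 1)))"
  define C where "C = (\<lambda>d. mm d powr (1 - a) * EB q d Et)"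
  have A: "((\<lambda>d. mm d * (X1 d - 1)) \<longlongrightarrow> - (c * (1 - q))) sequentially"
    by (rule tendsto_bound[OF _ lim_u1]) (use ev_m1 B1 in \<open>auto simp: X1_def elim!: eventually_mono\<close>)
  have X2l: "(X2 \<longlongrightarrow> 1) sequentially"
    by (rule tendsto_bound[OF _ lim_u2]) (use ev_m1 B2 in \<open>auto simp: X2_def elim!: eventually_mono\<close>)
  have Cl: "(C \<longlongrightarrow> 0) sequentially"
    by (rule tendsto_bound[OF _ lim_u3]) (use ev_m1 B3[OF _ Et_bound] in \<open>auto simp: C_def elim!: eventually_mono\<close>)
  have "((\<lambda>d. (mm d * (X1 d - 1) - 2 * c * X2 d + C d) / q) \<longlongrightarrow> (- (c * (1 - q)) - 2 * c * 1 + 0) / q) sequentially"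
    by (intro tendsto_intros A X2l Cl) (use q0 in auto)
  moreover have "eventually (\<lambda>d. (mm d * (X1 d - 1) - 2 * c * X2 d + C d) / q = real d * (W d - 1)) sequentially"
    using ev_m1
  proof eventually_elim
    case (elim d)
    have m0: "mm d > 0" using elim by simp
    have Wd: "W d = X1 d - (2 * c / mm d) * X2 d + mm d powr (-a) * EB q d Et"
      unfolding W_def X1_def X2_def using I_decomp[OF elim] by simp
    have "mm d * mm d powr (-a) = mm d powr (1 - a)" using m0 by (simp add: powr_diff powr_minus_divide)
    hence e: "mm d * (W d - 1) = mm d * (X1 d - 1) - 2 * c * X2 d + C d"
      unfolding Wd C_def using m0 by (simp add: algebra_simps)
    show ?case unfolding e[symmetric] using q0 by (simp add: mm_def)
  qed
  moreover have "(- (c * (1 - q)) - 2 * c * 1 + 0) / q = - (c * (3 - q) / q)" using q0 by (simp add: field_simps minus_divide_left[symmetric])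
  ultimately show ?thesis by (simp add: tendsto_cong)
qed

end


lemma sum_shift0g: "(\<Sum>t=1..d. f t) = (\<Sum>t\<le>d. f t) - f 0" for f :: "nat \<Rightarrow> real"
proof -
  have "{..d} = insert 0 {1..d}" by auto
  then show ?thesis by simp
qed

lemma part1: assumes q0: "0 < q" and q1: "q \<le> 1" and d: "d \<ge> 1"
  shows "(sigma_bar q 2 d)\<^sup>2 = q / real d"
proof -
  have r: "h_bin q d t * Gamma (real t / 2 + 2 / 2) / Gamma (real t / 2) = (1/2) * (h_bin q d t * real t)"
    if "t \<in> {1..d}" for t
  proof -
    have tp: "real t / 2 > 0" using that by auto
    have "Gamma (real t / 2 + 1) = (real t / 2) * Gamma (real t / 2)"
      by (rule Gamma_plus1) (use tp in \<open>auto elim!: nonpos_Ints_cases\<close>)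
    moreover have "Gamma (real t / 2) > 0" using tp by simp
    ultimately show ?thesis by (simp add: field_simps)
  qed
  have "(\<Sum>t=1..d. h_bin q d t * Gamma (real t / 2 + 2 / 2) / Gamma (real t / 2)) = (1/2) * (\<Sum>t=1..d. h_bin q d t * real t)"
    unfolding sum_distrib_left by (rule sum.cong[OF refl r])
  also have "(\<Sum>t=1..d. h_bin q d t * real t) = EB q d (\<lambda>t. real t)"
    unfolding EB_def by (subst sum_shift0g) simp
  also have "EB q d (\<lambda>t. real t) = real d * q"
  proof -
    have "EB q d (\<lambda>t. real t) = EB q d (\<lambda>t. (real t - real d * q) + real d * q)" by simp
    also have "\<dots> = EB q d (\<lambda>t. real t - real d * q) + EB q d (\<lambda>t. real d * q)" by (rule EB_lin(1))
    also have "\<dots> = real d * q" by (simp only: EB_mean EB_const)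
    finally show ?thesis .
  qed
  finally have I: "I1q q 2 d = real d / q" unfolding I1q_def using q0
    by (simp add: powr_minus_divide power2_eq_square field_simps)
  have dq: "real d / q > 0" using d q0 by simp
  have "(sigma_bar q 2 d)\<^sup>2 = ((real d / q) powr (-1/2)) powr 2" unfolding sigma_bar_def I
    using dq by (simp add: powr_realpow)
  also have "\<dots> = (real d / q) powr (-1)" by (simp add: powr_powr)
  also have "\<dots> = q / real d" using dq q0 by (simp add: powr_minus_divide)
  finally show ?thesis .
qed

context stp begin

lemma Phi_lim: "((\<lambda>e. ((1 + e) powr (-1/a) - 1) / e) \<longlongrightarrow> -1/a) (at 0)"
proof -
  have "((\<lambda>e::real. (1 + e) powr (-1/a)) has_field_derivative (-1/a) * (1 + 0) powr (-1/a - 1) * 1) (at 0)"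
    by (auto intro!: derivative_eq_intros)
  hence "((\<lambda>e::real. (1 + e) powr (-1/a)) has_field_derivative (-1/a)) (at 0)" by simp
  then show ?thesis unfolding has_field_derivative_iff by simp
qed

lemma part2_loc:
  "(\<lambda>d::nat. (sigma_bar q (2 * a) d)\<^sup>2 - q / real d - (3 - q) * (2 - 2 * a) / (4 * (real d)\<^sup>2))
     \<in> o(\<lambda>d. 1 / (real d)\<^sup>2)"
proof -
  define L where "L = - (c * (3 - q) / q)"
  define K where "K = (3 - q) * (2 - 2 * a) / 4"
  define Z where "Z = (\<lambda>d. real d * (W d - 1))"
  define Phi where "Phi = (\<lambda>e::real. ((1 + e) powr (-1/a) - 1) / e)"
  have ZL: "(Z \<longlongrightarrow> L) sequentially" unfolding Z_def L_def by (rule Z_lim)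
  have L0: "L \<noteq> 0" using c_bounds q0 q1 by (simp add: L_def)
  have epsl: "((\<lambda>d. W d - 1) \<longlongrightarrow> 0) sequentially"
  proof -
    have "((\<lambda>d. Z d * inverse (real d)) \<longlongrightarrow> L * 0) sequentially"
      by (intro tendsto_mult ZL tendsto_inverse_0_at_top filterlim_real_sequentially)
    moreover have "eventually (\<lambda>d. Z d * inverse (real d) = W d - 1) sequentially"
      using eventually_gt_at_top[of "0::nat"] by eventually_elim (simp add: Z_def)
    ultimately show ?thesis using Lim_transform_eventually by fastforce
  qed
  have Zne: "eventually (\<lambda>d. Z d \<noteq> 0) sequentially" by (rule tendsto_imp_eventually_ne[OF ZL L0])
  have epsne: "eventually (\<lambda>d. W d - 1 \<noteq> 0) sequentially"
    using Zne by eventually_elim (simp add: Z_def)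
  have Wpos: "eventually (\<lambda>d. W d > 0) sequentially"
  proof -
    have "((\<lambda>d. W d) \<longlongrightarrow> 1) sequentially" using tendsto_add[OF epsl tendsto_const[of 1]] by simp
    then show ?thesis by (rule order_tendstoD(1)) simp
  qed
  have fl: "filterlim (\<lambda>d. W d - 1) (at 0) sequentially"
    unfolding filterlim_at using epsl epsne by auto
  have PhiL: "((\<lambda>d. Phi (W d - 1)) \<longlongrightarrow> -1/a) sequentially"
    unfolding Phi_def using filterlim_compose[OF Phi_lim fl] by simp
  have G: "((\<lambda>d. q * Z d * Phi (W d - 1) - K) \<longlongrightarrow> q * L * (-1/a) - K) sequentially"
    by (intro tendsto_intros ZL PhiL)
  have G0: "q * L * (-1/a) - K = 0" using q0 a0 by (simp add: L_def K_def c_def field_simps)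
  have ev: "eventually (\<lambda>d. ((sigma_bar q (2 * a) d)\<^sup>2 - q / real d - (3 - q) * (2 - 2 * a) / (4 * (real d)\<^sup>2)) / (1 / (real d)\<^sup>2)
      = q * Z d * Phi (W d - 1) - K) sequentially"
    using eventually_gt_at_top[of "0::nat"] Wpos epsne
  proof eventually_elim
    case (elim d)
    have d0: "real d > 0" using elim by simp
    have qd: "(q / real d) powr a > 0" using q0 d0 by simp
    define I where "I = I1q q (2 * a) d"
    have I: "I = W d / (q / real d) powr a" using qd by (simp add: W_def I_def)
    have Ipos: "I > 0" using I qd elim by simp
    have "(sigma_bar q (2 * a) d)\<^sup>2 = (I powr (-1 / (2 * a))) powr 2"
      unfolding sigma_bar_def I_def[symmetric] using Ipos by (simp add: powr_realpow)
    also have "\<dots> = I powr (-1/a)" using a0 by (simp add: powr_powr)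
    also have "\<dots> = W d powr (-1/a) * ((q / real d) powr a) powr (1/a)"
    proof -
      define Y where "Y = (q / real d) powr a"
      have Y0: "Y > 0" using qd by (simp add: Y_def)
      have "(W d / Y) powr (-1/a) = W d powr (-1/a) / Y powr (-1/a)" by (rule powr_divide)
      moreover have "Y powr (-1/a) = 1 / Y powr (1/a)" using powr_minus_divide[of Y "1/a"] by simp
      ultimately have "(W d / Y) powr (-1/a) = W d powr (-1/a) * Y powr (1/a)" by simp
      then show ?thesis unfolding I Y_def .
    qed
    also have "((q / real d) powr a) powr (1/a) = q / real d" using a0 q0 by (simp add: powr_powr)
    finally have sig: "(sigma_bar q (2 * a) d)\<^sup>2 = W d powr (-1/a) * (q / real d)" .
    have pq: "q * Z d * Phi (W d - 1) = q * real d * (W d powr (-1/a) - 1)"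
      unfolding Z_def Phi_def using elim by simp
    moreover have e3: "(3 - q) * (2 - 2 * a) / (4 * (real d)\<^sup>2) = K / (real d)\<^sup>2" by (simp add: K_def)
    moreover have alg: "(V * (q / D) - q / D - K / D\<^sup>2) / (1 / D\<^sup>2) = q * D * (V - 1) - K"
      if "D > 0" for V D :: real using that by (simp add: field_simps power2_eq_square)
    show ?case unfolding sig e3 alg[OF d0] pq by simp
  qed
  show ?thesis
  proof (rule smalloI_tendsto)
    show "((\<lambda>d. ((sigma_bar q (2 * a) d)\<^sup>2 - q / real d - (3 - q) * (2 - 2 * a) / (4 * (real d)\<^sup>2)) / (1 / (real d)\<^sup>2)) \<longlongrightarrow> 0) at_top"
      using Lim_transform_eventually[OF G ev[unfolded eventually_conj_iff, THEN eventually_mono]] G0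
      by (metis (mono_tags, lifting) Lim_transform_eventually G ev eq_commute)
    show "eventually (\<lambda>d. 1 / (real d)\<^sup>2 \<noteq> 0) at_top"
      using eventually_gt_at_top[of "0::nat"] by eventually_elim simp
  qed
qed

end

theorem mainTheorem13:
  fixes q :: real
  assumes "0 < q" and "q \<le> 1"
  shows "(\<forall>d::nat. d \<ge> 1 \<longrightarrow> (sigma_bar q 2 d)\<^sup>2 = q / real d)
    \<and> (\<forall>s::real. 0 < s \<and> s \<le> 2 \<longrightarrow>
         (\<lambda>d::nat. (sigma_bar q s d)\<^sup>2 - q / real d - (3 - q) * (2 - s) / (4 * (real d)\<^sup>2))
           \<in> o(\<lambda>d. 1 / (real d)\<^sup>2))"
proof (intro conjI allI impI)
  fix d :: nat assume "d \<ge> 1"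
  then show "(sigma_bar q 2 d)\<^sup>2 = q / real d" using part1[OF assms] by blast
next
  fix s :: real assume s: "0 < s \<and> s \<le> 2"
  show "(\<lambda>d::nat. (sigma_bar q s d)\<^sup>2 - q / real d - (3 - q) * (2 - s) / (4 * (real d)\<^sup>2))
           \<in> o(\<lambda>d. 1 / (real d)\<^sup>2)"
  proof (cases "s = 2")
    case True
    show ?thesis
    proof (rule smalloI_tendsto)
      have "eventually (\<lambda>d::nat. 0 = ((sigma_bar q s d)\<^sup>2 - q / real d - (3 - q) * (2 - s) / (4 * (real d)\<^sup>2)) / (1 / (real d)\<^sup>2)) at_top"
        using eventually_ge_at_top[of "1::nat"] by eventually_elim (simp add: True part1[OF assms])
      then show "((\<lambda>d::nat. ((sigma_bar q s d)\<^sup>2 - q / real d - (3 - q) * (2 - s) / (4 * (real d)\<^sup>2)) / (1 / (real d)\<^sup>2)) \<longlongrightarrow> 0) at_top"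
        by (rule Lim_transform_eventually[OF tendsto_const])
      show "eventually (\<lambda>d::nat. 1 / (real d)\<^sup>2 \<noteq> 0) at_top"
        using eventually_gt_at_top[of "0::nat"] by eventually_elim simp
    qed
  next
    case False
    interpret stp "s / 2" q by unfold_locales (use s False assms in auto)
    have "2 * (s / 2) = s" by simp
    then show ?thesis using part2_loc by simp
  qed
qed


end
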